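(* Let $\lambda/\mu$ be an edgewise connected skew diagram whose boxes have contents $c_{\min}, c_{\min}+1,\ldots,c_{\max}$, and let $i$ be an integer with $c_{\min}\le i<c_{\max}$. Let $\Pi$ be an outside decomposition of $\lambda/\mu$, and let $\Pi'=\omega_i(\Pi)$ be the outside decomposition obtained from $\Pi$ by the twist transformation $\omega_i$. Then exactly one of the following holds: (a) $i\notin \mathrm{Term}(\Pi)$, $i+1\notin \mathrm{Init}(\Pi)$, $\mathrm{Init}(\Pi')=\mathrm{Init}(\Pi)\cup\{i+1\}$ and $\mathrm{Term}(\Pi')=\mathrm{Term}(\Pi)\cup\{i\}$; (b) $i\in \mathrm{Term}(\Pi)$, $i+1\in \mathrm{Init}(\Pi)$, $\mathrm{Init}(\Pi')=\mathrm{Init}(\Pi)\setminus\{i+1\}$ and $\mathrm{Term}(\Pi')=\mathrm{Term}(\Pi)\setminus\{i\}$; (c) $i\in \mathrm{Term}(\Pi)$, $i+1\notin \mathrm{Init}(\Pi)$, $\mathrm{Init}(\Pi')=\mathrm{Init}(\Pi)$ and $\mathrm{Term}(\Pi')=\mathrm{Term}(\Pi)$; (d) $i\notin \mathrm{Term}(\Pi)$, $i+1\in \mathrm{Init}(\Pi)$, $\mathrm{Init}(\Pi')=\mathrm{Init}(\Pi)$ and $\mathrm{Term}(\Pi')=\mathrm{Term}(\Pi)$.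
   Context: Diagrams use English convention: box $(r,c)$ is in row $r$ from the top and column $c$ from the left; its content is $c-r$. A skew diagram $\lambda/\mu$ ($\mu\subseteq\lambda$ partitions) is the set of boxes of $\lambda$ not in $\mu$; it is edgewise connected if its boxes are connected via shared edges. A border strip is an edgewise connected skew diagram containing no $2\times 2$ block of boxes; its boxes have consecutive contents, each box (except the last) being followed by the box of next content which lies either directly above it ("up") or directly to its right ("right"). An outside decomposition of $\lambda/\mu$ is a partition of its boxes into pairwise disjoint border strips such that each strip has its starting box (smallest content) on the left or bottom perimeter of the diagram and its ending box (largest content) on the right or top perimeter. For a strip $\theta$, $p(\theta)$ and $q(\theta)$ denote the contents of its initial and terminal boxes; for $\Pi=(\theta_1,\ldots,\theta_m)$, $\mathrm{Init}(\Pi)=\{p(\theta_1),\ldots,p(\theta_m)\}$ and $\mathrm{Term}(\Pi)=\{q(\theta_1),\ldots,q(\theta_m)\}$. Fact (Chen–Yan–Yang): for edgewise connected $\lambda/\mu$, outside decompositions $\Pi$ are in bijection with border strips $\phi$ with boxes of contents $c_{\min},\ldots,c_{\max}$ (the cutting strip of $\Pi$), where for each $j$ with $c_{\min}\le j<c_{\max}$, the box of content $j+1$ of $\phi$ lies above (resp. to the right of) the box of content $j$ of $\phi$ iff in every strip of $\Pi$ containing boxes of contents $j$ and $j+1$, the box of content $j+1$ lies above (resp. to the right of) the box of content $j$. The twist transformation $\omega_i$ maps $\Pi$ to the outside decomposition whose cutting strip is obtained from that of $\Pi$ by switching the relative position of its boxes of contents $i$ and $i+1$ (up $\leftrightarrow$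 right), keeping all other relative positions. *)

theory Defs
  imports Main
begin

(* Boxes are pairs (r, c) of integers: row r (from the top), column c (from the left).
   English convention; content of box (r,c) is c - r. *)
type_synonym box = "int \<times> int"

definition content :: "box \<Rightarrow> int" where
  "content b = snd b - fst b"

definition is_partition :: "nat list \<Rightarrow> bool" where
  "is_partition la \<longleftrightarrow> sorted_wrt (\<ge>) la"

definition part_row :: "nat list \<Rightarrow> int \<Rightarrow> int" where
  "part_row la r = (if 1 \<le> r \<and> r \<le> int (length la) then int (la ! nat (r - 1)) else 0)"

definition part_le :: "nat list \<Rightarrow> nat list \<Rightarrow> bool" where
  "part_le mu la \<longleftrightarrow> (\<forall>r. part_row mu r \<le> part_row la r)"

definition skew :: "nat list \<Rightarrow> nat list \<Rightarrow> box set" where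
  "skew la mu = {(r, c). 1 \<le> c \<and> part_row mu r < c \<and> c \<le> part_row la r}"

definition is_skew_diagram :: "box set \<Rightarrow> bool" where
  "is_skew_diagram S \<longleftrightarrow>
     (\<exists>la mu. is_partition la \<and> is_partition mu \<and> part_le mu la \<and> S = skew la mu)"

definition adjacent :: "box \<Rightarrow> box \<Rightarrow> bool" where
  "adjacent a b \<longleftrightarrow> \<bar>fst a - fst b\<bar> + \<bar>snd a - snd b\<bar> = 1"

definition edge_connected :: "box set \<Rightarrow> bool" where
  "edge_connected S \<longleftrightarrow>
     (\<forall>a\<in>S. \<forall>b\<in>S. (a, b) \<in> {(x, y). x \<in> S \<and> y \<in> S \<and> adjacent x y}\<^sup>*)"

definition no_2x2 :: "box set \<Rightarrow> bool" where
  "no_2x2 S \<longleftrightarrow>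
     \<not> (\<exists>r c. (r, c) \<in> S \<and> (r + 1, c) \<in> S \<and> (r, c + 1) \<in> S \<and> (r + 1, c + 1) \<in> S)"

definition border_strip :: "box set \<Rightarrow> bool" where
  "border_strip S \<longleftrightarrow> S \<noteq> {} \<and> is_skew_diagram S \<and> edge_connected S \<and> no_2x2 S"

definition pc :: "box set \<Rightarrow> int" where
  "pc S = Min (content ` S)"

definition qc :: "box set \<Rightarrow> int" where
  "qc S = Max (content ` S)"

definition on_left_or_bottom :: "box set \<Rightarrow> box \<Rightarrow> bool" where
  "on_left_or_bottom D b \<longleftrightarrow> (fst b, snd b - 1) \<notin> D \<or> (fst b + 1, snd b) \<notin> D"

definition on_right_or_top :: "box set \<Rightarrow> box \<Rightarrow> bool" where
  "on_right_or_top D b \<longleftrightarrow> (fst b, snd b + 1) \<notin> D \<or> (fst b - 1, snd b) \<notin> D"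

definition outside_decomp :: "box set \<Rightarrow> box set set \<Rightarrow> bool" where
  "outside_decomp D P \<longleftrightarrow>
     \<Union>P = D \<and>
     (\<forall>A\<in>P. \<forall>B\<in>P. A \<noteq> B \<longrightarrow> A \<inter> B = {}) \<and>
     (\<forall>T\<in>P. border_strip T \<and>
        (\<forall>b\<in>T. content b = pc T \<longrightarrow> on_left_or_bottom D b) \<and>
        (\<forall>b\<in>T. content b = qc T \<longrightarrow> on_right_or_top D b))"

definition Init :: "box set set \<Rightarrow> int set" where
  "Init P = pc ` P"

definition Term :: "box set set \<Rightarrow> int set" where
  "Term P = qc ` P"

(* A cutting strip with contents
   cmin..cmax is encoded by its step directions dir :: int => bool, where dir j = True
   means the box of content j+1 lies above the box of content j ("up"), False means
   it lies to the right ("right"). *)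
definition cut_link :: "box set \<Rightarrow> (int \<Rightarrow> bool) \<Rightarrow> (box \<times> box) set" where
  "cut_link D dir =
     {(b, b'). b \<in> D \<and> b' \<in> D \<and>
        b' = (if dir (content b) then (fst b - 1, snd b) else (fst b, snd b + 1))}"

definition cut_decomp :: "box set \<Rightarrow> (int \<Rightarrow> bool) \<Rightarrow> box set set" where
  "cut_decomp D dir =
     D // {(a, b). a \<in> D \<and> b \<in> D \<and> (a, b) \<in> (cut_link D dir \<union> (cut_link D dir)\<inverse>)\<^sup>*}"

(* the twist transformation omega_i: switch the relative position of the boxes of
   contents i and i+1 of the cutting strip of P *)
definition twist :: "box set \<Rightarrow> int \<Rightarrow> box set set \<Rightarrow> box set set" where
  "twist D i P =
     (let dir = (SOME dir. P = cut_decomp D dir) in cut_decomp D (dir(i := \<not> dir i)))"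

definition exactly_one :: "bool list \<Rightarrow> bool" where
  "exactly_one xs \<longleftrightarrow> length (filter id xs) = 1"

end

theory Submission
  imports Defs
begin


lemma part_row_nonneg: "0 \<le> part_row la r"
  by (simp add: part_row_def)

lemma part_row_mono:
  assumes "is_partition la" "1 \<le> r" "r \<le> r'"
  shows "part_row la r' \<le> part_row la r"
proof (cases "r' \<le> int (length la)")
  case True
  have "la ! nat (r' - 1) \<le> la ! nat (r - 1)"
  proof (cases "r = r'")
    case False
    then have "nat (r - 1) < nat (r' - 1)" "nat (r' - 1) < length la" using assms True by auto
    then show ?thesis using assms(1) unfolding is_partition_def sorted_wrt_iff_nth_less by blast
  qed simp
  then show ?thesis using True assms by (simp add: part_row_def)
next
  case False
  then show ?thesis by (simp add: part_row_def)
qed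

lemma skew_row_ge1: "(r, c) \<in> skew la mu \<Longrightarrow> 1 \<le> r"
  unfolding skew_def part_row_def by (auto split: if_splits)

lemma skew_conv:
  assumes "is_partition la" "is_partition mu"
    and "(r1, c1) \<in> skew la mu" "(r2, c2) \<in> skew la mu"
    and "r1 \<le> r" "r \<le> r2" "c1 \<le> c" "c \<le> c2"
  shows "(r, c) \<in> skew la mu"
proof -
  have r1: "1 \<le> r1" using skew_row_ge1 assms(3) .
  have "part_row mu r \<le> part_row mu r1" using part_row_mono[OF assms(2) r1 assms(5)] .
  moreover have "part_row la r2 \<le> part_row la r" using part_row_mono[OF assms(1)] r1 assms by auto
  ultimately show ?thesis using assms(3,4,7,8) unfolding skew_def by auto
qed

definition convex :: "box set \<Rightarrow> bool" where
  "convex S \<longleftrightarrow> (\<forall>r1 c1 r2 c2 r c. (r1, c1) \<in> S \<longrightarrow> (r2, c2) \<in> S \<longrightarrow> r1 \<le> r \<longrightarrow> r \<le> r2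
      \<longrightarrow> c1 \<le> c \<longrightarrow> c \<le> c2 \<longrightarrow> (r, c) \<in> S)"

lemma convexD: "convex S \<Longrightarrow> (r1, c1) \<in> S \<Longrightarrow> (r2, c2) \<in> S \<Longrightarrow> r1 \<le> r \<Longrightarrow> r \<le> r2
      \<Longrightarrow> c1 \<le> c \<Longrightarrow> c \<le> c2 \<Longrightarrow> (r, c) \<in> S"
  unfolding convex_def by blast

lemma convex_skew: "is_partition la \<Longrightarrow> is_partition mu \<Longrightarrow> convex (skew la mu)"
  unfolding convex_def using skew_conv by blast

lemma convex_skew_diagram: "is_skew_diagram S \<Longrightarrow> convex S"
  unfolding is_skew_diagram_def using convex_skew by blast

lemma finite_skew: "finite (skew la mu)"
proof -
  have "skew la mu \<subseteq> {1..int (length la)} \<times> {1..int (sum_list la)}"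
  proof
    fix x assume "x \<in> skew la mu"
    then obtain r c where x: "x = (r, c)" "1 \<le> c" "c \<le> part_row la r" unfolding skew_def by auto
    then have r: "1 \<le> r" "r \<le> int (length la)" by (auto simp: part_row_def split: if_splits)
    then have "la ! nat (r - 1) \<le> sum_list la" by (intro member_le_sum_list) auto
    then show "x \<in> {1..int (length la)} \<times> {1..int (sum_list la)}" using x r by (auto simp: part_row_def)
  qed
  then show ?thesis by (rule finite_subset) auto
qed




definition upb :: "box \<Rightarrow> box" where "upb b = (fst b - 1, snd b)"
definition rtb :: "box \<Rightarrow> box" where "rtb b = (fst b, snd b + 1)"
definition dnb :: "box \<Rightarrow> box" where "dnb b = (fst b + 1, snd b)"
definition lfb :: "box \<Rightarrow> box" where "lfb b = (fst b, snd b - 1)"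

lemmas dirs_defs = upb_def rtb_def dnb_def lfb_def

lemma cut_link_content: "(a, b) \<in> cut_link D d \<Longrightarrow> content b = content a + 1"
  unfolding cut_link_def content_def by (auto split: if_splits)

lemma cut_link_fun: "(a, b) \<in> cut_link D d \<Longrightarrow> (a, b') \<in> cut_link D d \<Longrightarrow> b = b'"
  unfolding cut_link_def by auto

lemma cut_link_inj:
  assumes "(a, b) \<in> cut_link D d" "(a', b) \<in> cut_link D d" shows "a = a'"
proof -
  have c: "content a = content a'" using cut_link_content[OF assms(1)] cut_link_content[OF assms(2)] by simp
  show ?thesis
  proof (cases "d (content a)")
    case True
    then have "b = (fst a - 1, snd a)" "b = (fst a' - 1, snd a')" using assms c unfolding cut_link_def by auto
    then show ?thesis by (simp add: prod_eq_iff)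
  next
    case False
    then have "b = (fst a, snd a + 1)" "b = (fst a', snd a' + 1)" using assms c unfolding cut_link_def by auto
    then show ?thesis by (simp add: prod_eq_iff)
  qed
qed

lemma cut_link_star_content: "(a, b) \<in> (cut_link D d)\<^sup>* \<Longrightarrow> content a \<le> content b"
  by (induction rule: rtrancl_induct) (auto dest: cut_link_content)

lemma nopred_star:
  assumes "\<forall>a. (a, b) \<notin> cut_link D d" "(b, y) \<in> (cut_link D d \<union> (cut_link D d)\<inverse>)\<^sup>*"
  shows "(b, y) \<in> (cut_link D d)\<^sup>*"
  using assms(2)
proof (induction rule: rtrancl_induct)
  case (step y z)
  show ?case
  proof (cases "(y, z) \<in> cut_link D d")
    case True then show ?thesis using step by auto
  next
    case False
    then have zy: "(z, y) \<in> cut_link D d" using step by auto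
    from step.IH show ?thesis
    proof (cases rule: rtranclE)
      case base then show ?thesis using zy assms(1) by blast
    next
      case (step y')
      then have "y' = z" using zy cut_link_inj by blast
      then show ?thesis using step by auto
    qed
  qed
qed simp

lemma nosucc_star:
  assumes "\<forall>a. (b, a) \<notin> cut_link D d" "(b, y) \<in> (cut_link D d \<union> (cut_link D d)\<inverse>)\<^sup>*"
  shows "(y, b) \<in> (cut_link D d)\<^sup>*"
  using assms(2)
proof (induction rule: rtrancl_induct)
  case (step y z)
  show ?case
  proof (cases "(z, y) \<in> cut_link D d")
    case True then show ?thesis using step by (meson converse_rtrancl_into_rtrancl)
  next
    case False
    then have zy: "(y, z) \<in> cut_link D d" using step by auto
    from step.IH show ?thesis
    proof (cases rule: converse_rtranclE)
      case base then show ?thesis using zy assms(1) by blast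
    next
      case (step y')
      then have "y' = z" using zy cut_link_fun by blast
      then show ?thesis using step by auto
    qed
  qed
qed simp

definition cut_rel :: "box set \<Rightarrow> (int \<Rightarrow> bool) \<Rightarrow> (box \<times> box) set" where
  "cut_rel D d = {(a, b). a \<in> D \<and> b \<in> D \<and> (a, b) \<in> (cut_link D d \<union> (cut_link D d)\<inverse>)\<^sup>*}"

lemma cut_decomp_alt: "cut_decomp D d = D // cut_rel D d"
  unfolding cut_decomp_def cut_rel_def ..

lemma cut_link_D: "(a, b) \<in> cut_link D d \<Longrightarrow> a \<in> D \<and> b \<in> D"
  unfolding cut_link_def by auto

lemma Init_cut:
  assumes "finite D"
  shows "Init (cut_decomp D d) = content ` {b \<in> D. \<forall>a. (a, b) \<notin> cut_link D d}"
proof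
  show "Init (cut_decomp D d) \<subseteq> content ` {b \<in> D. \<forall>a. (a, b) \<notin> cut_link D d}"
  proof
    fix k assume "k \<in> Init (cut_decomp D d)"
    then obtain x where x: "x \<in> D" "k = pc (cut_rel D d `` {x})"
      unfolding Init_def cut_decomp_alt quotient_def by auto
    let ?C = "cut_rel D d `` {x}"
    have fin: "finite ?C" using assms by (rule finite_subset[rotated]) (auto simp: cut_rel_def)
    have "x \<in> ?C" using x by (auto simp: cut_rel_def)
    then have "Min (content ` ?C) \<in> content ` ?C" using fin by (intro Min_in) auto
    then obtain m where m: "m \<in> ?C" "content m = Min (content ` ?C)" by auto
    have "\<forall>a. (a, m) \<notin> cut_link D d"
    proof (intro allI notI)
      fix a assume am: "(a, m) \<in> cut_link D d"
      then have "a \<in> ?C" using m(1) cut_link_D[OF am]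
        by (auto simp: cut_rel_def intro: rtrancl_into_rtrancl)
      then have "content m \<le> content a" using m fin by simp
      then show False using cut_link_content[OF am] by simp
    qed
    moreover have "m \<in> D" using m by (auto simp: cut_rel_def)
    moreover have "k = content m" using x m by (simp add: pc_def)
    ultimately show "k \<in> content ` {b \<in> D. \<forall>a. (a, b) \<notin> cut_link D d}"
      by blast
  qed
next
  show "content ` {b \<in> D. \<forall>a. (a, b) \<notin> cut_link D d} \<subseteq> Init (cut_decomp D d)"
  proof
    fix k assume "k \<in> content ` {b \<in> D. \<forall>a. (a, b) \<notin> cut_link D d}"
    then obtain b where b: "b \<in> D" "\<forall>a. (a, b) \<notin> cut_link D d" "k = content b" by auto
    let ?C = "cut_rel D d `` {b}"
    have fin: "finite ?C" using assms by (rule finite_subset[rotated]) (auto simp: cut_rel_def)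
    have bC: "b \<in> ?C" using b by (auto simp: cut_rel_def)
    have "\<forall>y\<in>?C. content b \<le> content y"
    proof
      fix y assume "y \<in> ?C"
      then have "(b, y) \<in> (cut_link D d \<union> (cut_link D d)\<inverse>)\<^sup>*" by (simp add: cut_rel_def)
      from nopred_star[OF b(2) this] show "content b \<le> content y" by (rule cut_link_star_content)
    qed
    then have "pc ?C = content b" unfolding pc_def using fin bC
      by (intro antisym Min_le) (auto intro!: Min.boundedI)
    moreover have "?C \<in> cut_decomp D d" using b unfolding cut_decomp_alt quotient_def by auto
    ultimately show "k \<in> Init (cut_decomp D d)" unfolding Init_def using b by force
  qed
qed

lemma Term_cut:
  assumes "finite D"
  shows "Term (cut_decomp D d) = content ` {b \<in> D. \<forall>a. (b, a) \<notin> cut_link D d}"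
proof
  show "Term (cut_decomp D d) \<subseteq> content ` {b \<in> D. \<forall>a. (b, a) \<notin> cut_link D d}"
  proof
    fix k assume "k \<in> Term (cut_decomp D d)"
    then obtain x where x: "x \<in> D" "k = qc (cut_rel D d `` {x})"
      unfolding Term_def cut_decomp_alt quotient_def by auto
    let ?C = "cut_rel D d `` {x}"
    have fin: "finite ?C" using assms by (rule finite_subset[rotated]) (auto simp: cut_rel_def)
    have "x \<in> ?C" using x by (auto simp: cut_rel_def)
    then have "Max (content ` ?C) \<in> content ` ?C" using fin by (intro Max_in) auto
    then obtain m where m: "m \<in> ?C" "content m = Max (content ` ?C)" by auto
    have "\<forall>a. (m, a) \<notin> cut_link D d"
    proof (intro allI notI)
      fix a assume am: "(m, a) \<in> cut_link D d"
      then have "a \<in> ?C" using m(1) cut_link_D[OF am]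
        by (auto simp: cut_rel_def intro: rtrancl_into_rtrancl)
      then have "content a \<le> content m" using m fin by simp
      then show False using cut_link_content[OF am] by simp
    qed
    moreover have "m \<in> D" using m by (auto simp: cut_rel_def)
    moreover have "k = content m" using x m by (simp add: qc_def)
    ultimately show "k \<in> content ` {b \<in> D. \<forall>a. (b, a) \<notin> cut_link D d}"
      by blast
  qed
next
  show "content ` {b \<in> D. \<forall>a. (b, a) \<notin> cut_link D d} \<subseteq> Term (cut_decomp D d)"
  proof
    fix k assume "k \<in> content ` {b \<in> D. \<forall>a. (b, a) \<notin> cut_link D d}"
    then obtain b where b: "b \<in> D" "\<forall>a. (b, a) \<notin> cut_link D d" "k = content b" by auto
    let ?C = "cut_rel D d `` {b}"
    have fin: "finite ?C" using assms by (rule finite_subset[rotated]) (auto simp: cut_rel_def)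
    have bC: "b \<in> ?C" using b by (auto simp: cut_rel_def)
    have "\<forall>y\<in>?C. content y \<le> content b"
    proof
      fix y assume "y \<in> ?C"
      then have "(b, y) \<in> (cut_link D d \<union> (cut_link D d)\<inverse>)\<^sup>*" by (simp add: cut_rel_def)
      from nosucc_star[OF b(2) this] show "content y \<le> content b" by (rule cut_link_star_content)
    qed
    then have "qc ?C = content b" unfolding qc_def using fin bC
      by (intro antisym Max_ge) (auto intro!: Max.boundedI)
    moreover have "?C \<in> cut_decomp D d" using b unfolding cut_decomp_alt quotient_def by auto
    ultimately show "k \<in> Term (cut_decomp D d)" unfolding Term_def using b by force
  qed
qed

lemma haspred_iff:
  assumes "b \<in> D"
  shows "(\<exists>a. (a, b) \<in> cut_link D d) \<longleftrightarrow> (if d (content b - 1) then dnb b \<in> D else lfb b \<in> D)"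
proof
  assume "\<exists>a. (a, b) \<in> cut_link D d"
  then obtain a where a: "(a, b) \<in> cut_link D d" by blast
  have c: "content a = content b - 1" using cut_link_content[OF a] by simp
  show "(if d (content b - 1) then dnb b \<in> D else lfb b \<in> D)"
    using a c unfolding cut_link_def dirs_defs by (auto split: if_splits)
next
  assume h: "(if d (content b - 1) then dnb b \<in> D else lfb b \<in> D)"
  show "\<exists>a. (a, b) \<in> cut_link D d"
  proof (cases "d (content b - 1)")
    case True
    have "content (dnb b) = content b - 1" by (simp add: dnb_def content_def)
    then have "(dnb b, b) \<in> cut_link D d" using True h assms unfolding cut_link_def dirs_defs by auto
    then show ?thesis by blast
  next
    case False
    have "content (lfb b) = content b - 1" by (simp add: lfb_def content_def)
    then have "(lfb b, b) \<in> cut_link D d" using False h assms unfolding cut_link_def dirs_defs by auto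
    then show ?thesis by blast
  qed
qed

lemma hassucc_iff:
  "b \<in> D \<Longrightarrow> (\<exists>a. (b, a) \<in> cut_link D d) \<longleftrightarrow> (if d (content b) then upb b \<in> D else rtb b \<in> D)"
  unfolding cut_link_def dirs_defs by auto




lemma switch_nat: "P 0 \<Longrightarrow> \<not> P n \<Longrightarrow> \<exists>k<n. P k \<and> \<not> P (Suc k)"
proof (induction n)
  case (Suc n)
  then show ?case by (cases "P n") (auto intro: less_SucI)
qed simp

lemma adjacent_content: "adjacent a b \<Longrightarrow> \<bar>content a - content b\<bar> \<le> 1"
  unfolding adjacent_def content_def by linarith

lemma ivt_path:
  assumes "(a, e) \<in> {(x, y). x \<in> S \<and> y \<in> S \<and> adjacent x y}\<^sup>*" "a \<in> S" "content a \<le> K" "K \<le> content e"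
  shows "\<exists>x\<in>S. content x = K"
  using assms(1,4)
proof (induction rule: rtrancl_induct)
  case base
  then show ?case using assms(2,3) by force
next
  case (step y z)
  show ?case
  proof (cases "K \<le> content y")
    case True then show ?thesis using step by blast
  next
    case False
    then have "content z = K" using step adjacent_content[of y z] by auto
    then show ?thesis using step by blast
  qed
qed

lemma ivt_conn:
  assumes "edge_connected S" "a \<in> S" "e \<in> S" "content a \<le> K" "K \<le> content e"
  shows "\<exists>x\<in>S. content x = K"
  using assms ivt_path unfolding edge_connected_def by blast

lemma convex_same_content:
  assumes cv: "convex T" and n2: "no_2x2 T" and x: "x \<in> T" and y: "y \<in> T"
    and c: "content x = content y"
  shows "x = y"
proof -
  have key: "a = b" if "a \<in> T" "b \<in> T" "content a = content b" "fst a \<le> fst b" for a b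
  proof (rule ccontr)
    assume ne: "a \<noteq> b"
    obtain r c where a: "a = (r, c)" by (cases a)
    obtain s t where b: "b = (s, t)" by (cases b)
    have "t - s = c - r" "r \<le> s" using that a b by (auto simp: content_def)
    then have lt: "r + 1 \<le> s" "c + 1 \<le> t" using ne a b by auto
    have "(r, c) \<in> T" "(r + 1, c) \<in> T" "(r, c + 1) \<in> T" "(r + 1, c + 1) \<in> T"
      using convexD[OF cv, of r c s t] that a b lt by auto
    then show False using n2 unfolding no_2x2_def by blast
  qed
  show ?thesis
  proof (cases "fst x \<le> fst y")
    case True then show ?thesis using key x y c by blast
  next
    case False then show ?thesis using key[of y x] x y c by auto
  qed
qed

lemma G_up:
  assumes cv: "convex D" and "x \<in> D" "upb x \<in> D" "b \<in> D" "content x = content b"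
    "upb b \<in> D" "rtb b \<notin> D" "lfb (upb b) \<notin> D"
  shows "x = b"
proof -
  obtain r c where b: "b = (r, c)" by (cases b)
  obtain s d where x: "x = (s, d)" by (cases x)
  have e: "d - s = c - r" using assms b x by (simp add: content_def)
  consider "s = r" | "s > r" | "s < r" by linarith
  then show ?thesis
  proof cases
    case 1 then show ?thesis using e b x by simp
  next
    case 2
    have "(r, c + 1) \<in> D" using convexD[OF cv, of "r - 1" c s d r "c + 1"] assms b x e 2
      by (simp add: dirs_defs)
    then show ?thesis using assms b by (simp add: dirs_defs)
  next
    case 3
    have "(r - 1, c - 1) \<in> D" using convexD[OF cv, of "s - 1" d r c "r - 1" "c - 1"] assms b x e 3
      by (simp add: dirs_defs)
    then show ?thesis using assms b by (simp add: dirs_defs)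
  qed
qed

lemma G_rt:
  assumes cv: "convex D" and "x \<in> D" "rtb x \<in> D" "b \<in> D" "content x = content b"
    "rtb b \<in> D" "upb b \<notin> D" "dnb (rtb b) \<notin> D"
  shows "x = b"
proof -
  obtain r c where b: "b = (r, c)" by (cases b)
  obtain s d where x: "x = (s, d)" by (cases x)
  have e: "d - s = c - r" using assms b x by (simp add: content_def)
  consider "s = r" | "s > r" | "s < r" by linarith
  then show ?thesis
  proof cases
    case 1 then show ?thesis using e b x by simp
  next
    case 2
    have "(r + 1, c + 1) \<in> D" using convexD[OF cv, of r "c + 1" s d "r + 1" "c + 1"] assms b x e 2
      by (simp add: dirs_defs)
    then show ?thesis using assms b by (simp add: dirs_defs)
  next
    case 3
    have "(r - 1, c) \<in> D" using convexD[OF cv, of s d r c "r - 1" c] assms b x e 3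
      by (simp add: dirs_defs)
    then show ?thesis using assms b by (simp add: dirs_defs)
  qed
qed

lemma G_mix:
  assumes cv: "convex D" and "b \<in> D" "b' \<in> D" "content b = content b'"
    "upb b \<in> D" "rtb b \<notin> D" "lfb (upb b) \<notin> D"
    "rtb b' \<in> D" "upb b' \<notin> D" "dnb (rtb b') \<notin> D"
  shows False
proof -
  obtain r c where b: "b = (r, c)" by (cases b)
  obtain s d where x: "b' = (s, d)" by (cases b')
  have e: "d - s = c - r" using assms b x by (simp add: content_def)
  consider "s = r" | "s > r" | "s = r - 1" | "s < r - 1" by linarith
  then show ?thesis
  proof cases
    case 1 then show ?thesis using e b x assms by (simp add: dirs_defs)
  next
    case 2
    have "(r, c + 1) \<in> D" using convexD[OF cv, of "r - 1" c s "d + 1" r "c + 1"] assms b x e 2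
      by (simp add: dirs_defs)
    then show ?thesis using assms b by (simp add: dirs_defs)
  next
    case 3
    then show ?thesis using assms b x e by (simp add: dirs_defs)
  next
    case 4
    have "(s + 1, d + 1) \<in> D" using convexD[OF cv, of s "d + 1" "r - 1" c "s + 1" "d + 1"] assms b x e 4
      by (simp add: dirs_defs)
    then show ?thesis using assms x by (simp add: dirs_defs)
  qed
qed




locale odl =
  fixes D :: "box set" and P :: "box set set"
  assumes cvD: "convex D" and finD: "finite D" and od: "outside_decomp D P"
begin

lemma odU: "\<Union>P = D"
  and odD: "\<forall>A\<in>P. \<forall>B\<in>P. A \<noteq> B \<longrightarrow> A \<inter> B = {}"
  and odT: "\<forall>T\<in>P. border_strip T \<and>
        (\<forall>b\<in>T. content b = pc T \<longrightarrow> on_left_or_bottom D b) \<and>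
        (\<forall>b\<in>T. content b = qc T \<longrightarrow> on_right_or_top D b)"
  using od unfolding outside_decomp_def by simp_all

lemma cover: "b \<in> D \<Longrightarrow> \<exists>T\<in>P. b \<in> T"
  using odU by blast

lemma sub: "T \<in> P \<Longrightarrow> T \<subseteq> D"
  using odU by blast

lemma disj: "T1 \<in> P \<Longrightarrow> T2 \<in> P \<Longrightarrow> b \<in> T1 \<Longrightarrow> b \<in> T2 \<Longrightarrow> T1 = T2"
  using odD by blast

lemma strip: "T \<in> P \<Longrightarrow> border_strip T"
  using odT by blast

lemma finT: "T \<in> P \<Longrightarrow> finite T"
  using sub finD finite_subset by blast

lemma qc_ge: "T \<in> P \<Longrightarrow> b \<in> T \<Longrightarrow> content b \<le> qc T"
  unfolding qc_def using finT by simp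

lemma pc_le: "T \<in> P \<Longrightarrow> b \<in> T \<Longrightarrow> pc T \<le> content b"
  unfolding pc_def using finT by simp

lemma outR: "T \<in> P \<Longrightarrow> b \<in> T \<Longrightarrow> content b = qc T \<Longrightarrow> rtb b \<notin> D \<or> upb b \<notin> D"
  using odT unfolding on_right_or_top_def dirs_defs by blast

lemma outL: "T \<in> P \<Longrightarrow> b \<in> T \<Longrightarrow> content b = pc T \<Longrightarrow> lfb b \<notin> D \<or> dnb b \<notin> D"
  using odT unfolding on_left_or_bottom_def dirs_defs by blast

lemma U: "T \<in> P \<Longrightarrow> x \<in> T \<Longrightarrow> y \<in> T \<Longrightarrow> content x = content y \<Longrightarrow> x = y"
  using strip convex_same_content convex_skew_diagram unfolding border_strip_def by blast

lemma CPu: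
  assumes T: "T \<in> P" and b: "b \<in> T" and lt: "content b < qc T"
  shows "upb b \<in> T \<or> rtb b \<in> T"
proof -
  have fin: "finite T" using finT T .
  have "qc T \<in> content ` T" unfolding qc_def using fin b by (intro Max_in) auto
  then obtain e where e: "e \<in> T" "content e = qc T" by auto
  have ec: "edge_connected T" and cv: "convex T"
    using strip[OF T] convex_skew_diagram unfolding border_strip_def by auto
  obtain x where x: "x \<in> T" "content x = content b + 1"
    using ivt_conn[OF ec b e(1), of "content b + 1"] lt e by auto
  obtain r c where bb: "b = (r, c)" by (cases b)
  obtain s t where xx: "x = (s, t)" by (cases x)
  have tt: "t = s + c - r + 1" using x bb xx by (simp add: content_def)
  consider "s = r - 1" | "s = r" | "s < r - 1" | "s > r" by linarith
  then show ?thesis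
  proof cases
    case 1 then show ?thesis using x bb xx tt by (simp add: dirs_defs)
  next
    case 2 then show ?thesis using x bb xx tt by (simp add: dirs_defs)
  next
    case 3
    have "(r - 1, c) \<in> T" using convexD[OF cv, of s t r c "r - 1" c] x b bb xx tt 3 by simp
    then show ?thesis using bb by (simp add: dirs_defs)
  next
    case 4
    have "(r, c + 1) \<in> T" using convexD[OF cv, of r c s t r "c + 1"] x b bb xx tt 4 by simp
    then show ?thesis using bb by (simp add: dirs_defs)
  qed
qed

lemma CPd:
  assumes T: "T \<in> P" and b: "b \<in> T" and lt: "pc T < content b"
  shows "dnb b \<in> T \<or> lfb b \<in> T"
proof -
  have fin: "finite T" using finT T .
  have "pc T \<in> content ` T" unfolding pc_def using fin b by (intro Min_in) auto
  then obtain e where e: "e \<in> T" "content e = pc T" by auto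
  have ec: "edge_connected T" and cv: "convex T"
    using strip[OF T] convex_skew_diagram unfolding border_strip_def by auto
  obtain x where x: "x \<in> T" "content x = content b - 1"
    using ivt_conn[OF ec e(1) b, of "content b - 1"] lt e by auto
  obtain r c where bb: "b = (r, c)" by (cases b)
  obtain s t where xx: "x = (s, t)" by (cases x)
  have tt: "t = s + c - r - 1" using x bb xx by (simp add: content_def)
  consider "s = r + 1" | "s = r" | "s > r + 1" | "s < r" by linarith
  then show ?thesis
  proof cases
    case 1 then show ?thesis using x bb xx tt by (simp add: dirs_defs)
  next
    case 2 then show ?thesis using x bb xx tt by (simp add: dirs_defs)
  next
    case 3
    have "(r + 1, c) \<in> T" using convexD[OF cv, of r c s t "r + 1" c] x b bb xx tt 3 by simp
    then show ?thesis using bb by (simp add: dirs_defs)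
  next
    case 4
    have "(r, c - 1) \<in> T" using convexD[OF cv, of s t r c r "c - 1"] x b bb xx tt 4 by simp
    then show ?thesis using bb by (simp add: dirs_defs)
  qed
qed

definition same :: "box \<Rightarrow> box \<Rightarrow> bool" where
  "same a b \<longleftrightarrow> (\<exists>T\<in>P. a \<in> T \<and> b \<in> T)"

definition UPj :: "int \<Rightarrow> bool" where
  "UPj j \<longleftrightarrow> (\<exists>b\<in>D. content b = j \<and> same b (upb b))"

definition RPj :: "int \<Rightarrow> bool" where
  "RPj j \<longleftrightarrow> (\<exists>b\<in>D. content b = j \<and> same b (rtb b))"

lemma same_D: "same a b \<Longrightarrow> a \<in> D \<and> b \<in> D"
  unfolding same_def using sub by blast

lemma content_upb: "content (upb b) = content b + 1"
  and content_rtb: "content (rtb b) = content b + 1"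
  and content_dnb: "content (dnb b) = content b - 1"
  and content_lfb: "content (lfb b) = content b - 1"
  by (simp_all add: dirs_defs content_def)

lemma upb_ne_rtb: "upb b \<noteq> rtb b"
  by (simp add: dirs_defs prod_eq_iff)

lemma F1:
  assumes "b \<in> D" "upb b \<in> D" "rtb b \<in> D"
  shows "same b (upb b) \<or> same b (rtb b)"
proof -
  obtain T where T: "T \<in> P" "b \<in> T" using cover assms(1) by blast
  have "content b \<noteq> qc T" using outR[OF T] assms by blast
  then have "content b < qc T" using qc_ge[OF T] by linarith
  then show ?thesis using CPu[OF T] T unfolding same_def by blast
qed

lemma same_unique: "same b (upb b) \<Longrightarrow> same b (rtb b) \<Longrightarrow> False"
proof -
  assume h: "same b (upb b)" "same b (rtb b)"
  obtain T1 where T1: "T1 \<in> P" "b \<in> T1" "upb b \<in> T1" using h(1) unfolding same_def by blast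
  obtain T2 where T2: "T2 \<in> P" "b \<in> T2" "rtb b \<in> T2" using h(2) unfolding same_def by blast
  have "T1 = T2" using disj T1 T2 by blast
  then have "upb b = rtb b" using U[OF T1(1) T1(3)] T2 content_upb content_rtb by simp
  then show False using upb_ne_rtb by blast
qed

lemma cfg1:
  assumes h1: "same z (upb z)" and h2: "same (fst z + 1, snd z + 1) (rtb (fst z + 1, snd z + 1))"
  shows False
proof -
  obtain r c where zz: "z = (r, c)" by (cases z)
  let ?z' = "(r + 1, c + 1)"
  obtain T1 where T1: "T1 \<in> P" "z \<in> T1" "upb z \<in> T1" using h1 unfolding same_def by blast
  obtain T2 where T2: "T2 \<in> P" "?z' \<in> T2" "rtb ?z' \<in> T2" using h2 zz unfolding same_def by auto
  have e2: "(r + 1, c + 2) = rtb ?z'" by (simp add: rtb_def)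
  have "(r - 1, c) \<in> D" "(r + 1, c + 2) \<in> D" using T1 T2 sub zz unfolding e2 by (auto simp: upb_def)
  then have wD: "(r, c + 1) \<in> D" using convexD[OF cvD, of "r - 1" c "r + 1" "c + 2" r "c + 1"] by simp
  let ?w = "(r, c + 1)"
  obtain Tw where Tw: "Tw \<in> P" "?w \<in> Tw" using cover wD by blast
  show False
  proof (cases "pc Tw < content ?w")
    case True
    from CPd[OF Tw True] have "?z' \<in> Tw \<or> z \<in> Tw" using zz by (simp add: dirs_defs)
    then show False
    proof
      assume "?z' \<in> Tw"
      then have "Tw = T2" using disj Tw T2 by blast
      then have "rtb ?z' = ?w" using U[OF T2(1) T2(3)] Tw by (simp add: content_def dirs_defs)
      then show False by (simp add: dirs_defs)
    next
      assume "z \<in> Tw"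
      then have "Tw = T1" using disj Tw T1 by blast
      then have "upb z = ?w" using U[OF T1(1) T1(3)] Tw zz by (simp add: content_def dirs_defs)
      then show False using zz by (simp add: dirs_defs)
    qed
  next
    case False
    then have "content ?w = pc Tw" using pc_le[OF Tw] by linarith
    from outL[OF Tw this] show False using T1 T2 sub zz by (auto simp: dirs_defs)
  qed
qed

lemma cfg2:
  assumes h1: "same z (rtb z)" and h2: "same (fst z + 1, snd z + 1) (upb (fst z + 1, snd z + 1))"
  shows False
proof -
  obtain r c where zz: "z = (r, c)" by (cases z)
  let ?z' = "(r + 1, c + 1)"
  obtain T1 where T1: "T1 \<in> P" "z \<in> T1" "rtb z \<in> T1" using h1 unfolding same_def by blast
  obtain T2 where T2: "T2 \<in> P" "?z' \<in> T2" "upb ?z' \<in> T2" using h2 zz unfolding same_def by auto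
  have "upb ?z' = rtb z" using zz by (simp add: dirs_defs)
  then have "T1 = T2" using disj[OF T1(1) T2(1) T1(3)] T2(3) by simp
  then have "z = ?z'" using U[OF T1(1) T1(2)] T2 zz by (simp add: content_def)
  then show False using zz by simp
qed

lemma diag_QR:
  assumes x: "x \<in> D" and y: "(fst x + int n, snd x + int n) \<in> D"
    and hx: "same x (upb x) \<or> same x (rtb x)"
    and hy: "same (fst x + int n, snd x + int n) (upb (fst x + int n, snd x + int n)) \<or>
             same (fst x + int n, snd x + int n) (rtb (fst x + int n, snd x + int n))"
    and k: "k \<le> n"
  shows "same (fst x + int k, snd x + int k) (upb (fst x + int k, snd x + int k)) \<or>
         same (fst x + int k, snd x + int k) (rtb (fst x + int k, snd x + int k))"
proof -
  obtain r c where xx: "x = (r, c)" by (cases x)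
  consider "k = 0" | "k = n" | "0 < k \<and> k < n" using k by linarith
  then show ?thesis
  proof cases
    case 1 then show ?thesis using hx xx by simp
  next
    case 2 then show ?thesis using hy by simp
  next
    case 3
    have yy: "(r + int n, c + int n) \<in> D" using y xx by simp
    have xD: "(r, c) \<in> D" using x xx by simp
    have "(r + int k, c + int k) \<in> D" using convexD[OF cvD xD yy, of "r + int k" "c + int k"] 3 by simp
    moreover have "(r + int k - 1, c + int k) \<in> D" using convexD[OF cvD xD yy, of "r + int k - 1" "c + int k"] 3 by simp
    moreover have "(r + int k, c + int k + 1) \<in> D" using convexD[OF cvD xD yy, of "r + int k" "c + int k + 1"] 3 by simp
    ultimately show ?thesis using F1[of "(r + int k, c + int k)"] xx by (simp add: dirs_defs)
  qed
qed

lemma L1: "UPj j \<Longrightarrow> RPj j \<Longrightarrow> False"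
proof -
  assume "UPj j" "RPj j"
  then obtain x y where x: "x \<in> D" "content x = j" "same x (upb x)"
    and y: "y \<in> D" "content y = j" "same y (rtb y)" unfolding UPj_def RPj_def by blast
  show False
  proof (cases "fst x \<le> fst y")
    case True
    define n where "n = nat (fst y - fst x)"
    have yeq: "y = (fst x + int n, snd x + int n)" using True x y n_def
      by (simp add: content_def prod_eq_iff)
    define Q where "Q k \<longleftrightarrow> same (fst x + int k, snd x + int k) (upb (fst x + int k, snd x + int k))" for k
    define R where "R k \<longleftrightarrow> same (fst x + int k, snd x + int k) (rtb (fst x + int k, snd x + int k))" for k
    have yD: "(fst x + int n, snd x + int n) \<in> D" using y(1) unfolding yeq .
    have hy: "same (fst x + int n, snd x + int n) (rtb (fst x + int n, snd x + int n))" using y(3) unfolding yeq .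
    have QR: "Q k \<or> R k" if "k \<le> n" for k
      using diag_QR[OF x(1) yD _ _ that] x(3) hy unfolding Q_def R_def by blast
    have "Q 0" using x unfolding Q_def by simp
    moreover have "\<not> Q n" using same_unique hy unfolding Q_def by blast
    ultimately obtain k where k: "k < n" "Q k" "\<not> Q (Suc k)" using switch_nat[of Q n] by blast
    then have "R (Suc k)" using QR[of "Suc k"] by simp
    then show False using cfg1[of "(fst x + int k, snd x + int k)"] k unfolding Q_def R_def
      by (simp add: algebra_simps)
  next
    case False
    define n where "n = nat (fst x - fst y)"
    have xeq: "x = (fst y + int n, snd y + int n)" using False x y n_def
      by (simp add: content_def prod_eq_iff)
    define Q where "Q k \<longleftrightarrow> same (fst y + int k, snd y + int k) (upb (fst y + int k, snd y + int k))" for k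
    define R where "R k \<longleftrightarrow> same (fst y + int k, snd y + int k) (rtb (fst y + int k, snd y + int k))" for k
    have xD: "(fst y + int n, snd y + int n) \<in> D" using x(1) unfolding xeq .
    have hx: "same (fst y + int n, snd y + int n) (upb (fst y + int n, snd y + int n))" using x(3) unfolding xeq .
    have QR: "Q k \<or> R k" if "k \<le> n" for k
      using diag_QR[OF y(1) xD _ _ that] y(3) hx unfolding Q_def R_def by blast
    have "\<not> Q 0" using y(3) same_unique[of y] unfolding Q_def by auto
    moreover have "Q n" using hx unfolding Q_def by blast
    ultimately obtain k where k: "k < n" "\<not> Q k" "Q (Suc k)" using switch_nat[of "\<lambda>k. \<not> Q k" n] by blast
    then have "R k" using QR[of k] by simp
    then show False using cfg2[of "(fst y + int k, snd y + int k)"] k unfolding Q_def R_def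
      by (simp add: algebra_simps)
  qed
qed

end




context odl
begin

lemma lemA:
  assumes b: "b \<in> D" and u: "upb b \<in> D" and ns: "\<not> same b (upb b)" and nr: "\<not> RPj (content b)"
  shows "rtb b \<notin> D \<and> lfb (upb b) \<notin> D"
proof
  obtain T1 where T1: "T1 \<in> P" "b \<in> T1" using cover b by blast
  have "\<not> content b < qc T1"
  proof
    assume "content b < qc T1"
    from CPu[OF T1 this] show False
    proof
      assume "upb b \<in> T1" then show False using ns T1 unfolding same_def by blast
    next
      assume "rtb b \<in> T1" then show False using nr T1 b unfolding RPj_def same_def by blast
    qed
  qed
  then have "content b = qc T1" using qc_ge[OF T1] by linarith
  then show "rtb b \<notin> D" using outR[OF T1] u by blast
next
  obtain T2 where T2: "T2 \<in> P" "upb b \<in> T2" using cover u by blast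
  have "\<not> pc T2 < content (upb b)"
  proof
    assume "pc T2 < content (upb b)"
    from CPd[OF T2 this] show False
    proof
      assume "dnb (upb b) \<in> T2" then show False using ns T2 unfolding same_def by (simp add: dirs_defs)
    next
      assume h: "lfb (upb b) \<in> T2"
      have "rtb (lfb (upb b)) = upb b" "content (lfb (upb b)) = content b"
        by (simp_all add: dirs_defs content_def)
      then have "same (lfb (upb b)) (rtb (lfb (upb b)))" using h T2 unfolding same_def by auto
      moreover have "lfb (upb b) \<in> D" using h T2 sub by blast
      ultimately show False using nr \<open>content (lfb (upb b)) = content b\<close> unfolding RPj_def by blast
    qed
  qed
  then have "content (upb b) = pc T2" using pc_le[OF T2] by linarith
  then show "lfb (upb b) \<notin> D" using outL[OF T2] b by (simp add: dirs_defs)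
qed

lemma lemB:
  assumes b: "b \<in> D" and u: "rtb b \<in> D" and ns: "\<not> same b (rtb b)" and nr: "\<not> UPj (content b)"
  shows "upb b \<notin> D \<and> dnb (rtb b) \<notin> D"
proof
  obtain T1 where T1: "T1 \<in> P" "b \<in> T1" using cover b by blast
  have "\<not> content b < qc T1"
  proof
    assume "content b < qc T1"
    from CPu[OF T1 this] show False
    proof
      assume "rtb b \<in> T1" then show False using ns T1 unfolding same_def by blast
    next
      assume "upb b \<in> T1" then show False using nr T1 b unfolding UPj_def same_def by blast
    qed
  qed
  then have "content b = qc T1" using qc_ge[OF T1] by linarith
  then show "upb b \<notin> D" using outR[OF T1] u by blast
next
  obtain T2 where T2: "T2 \<in> P" "rtb b \<in> T2" using cover u by blast
  have "\<not> pc T2 < content (rtb b)"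
  proof
    assume "pc T2 < content (rtb b)"
    from CPd[OF T2 this] show False
    proof
      assume "lfb (rtb b) \<in> T2" then show False using ns T2 unfolding same_def by (simp add: dirs_defs)
    next
      assume h: "dnb (rtb b) \<in> T2"
      have "upb (dnb (rtb b)) = rtb b" "content (dnb (rtb b)) = content b"
        by (simp_all add: dirs_defs content_def)
      then have "same (dnb (rtb b)) (upb (dnb (rtb b)))" using h T2 unfolding same_def by auto
      moreover have "dnb (rtb b) \<in> D" using h T2 sub by blast
      ultimately show False using nr \<open>content (dnb (rtb b)) = content b\<close> unfolding UPj_def by blast
    qed
  qed
  then have "content (rtb b) = pc T2" using pc_le[OF T2] by linarith
  then show "dnb (rtb b) \<notin> D" using outL[OF T2] b by (simp add: dirs_defs)
qed

definition dirP :: "int \<Rightarrow> bool" where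
  "dirP j \<longleftrightarrow> UPj j \<or> (\<not> RPj j \<and> \<not> (\<exists>b\<in>D. content b = j \<and> upb b \<in> D))"

lemma K1:
  assumes ab: "(a, b) \<in> cut_link D dirP"
  shows "same a b"
proof -
  have a: "a \<in> D" and bD: "b \<in> D" and beq: "b = (if dirP (content a) then upb a else rtb a)"
    using ab unfolding cut_link_def dirs_defs by auto
  show ?thesis
  proof (cases "dirP (content a)")
    case True
    then have bu: "b = upb a" using beq by simp
    show ?thesis
    proof (cases "UPj (content a)")
      case True
      then obtain x where x: "x \<in> D" "content x = content a" "same x (upb x)" unfolding UPj_def by blast
      show ?thesis
      proof (rule ccontr)
        assume ns: "\<not> same a b"
        have "\<not> RPj (content a)" using L1 True by blast
        from lemA[OF a bD[unfolded bu] ns[unfolded bu] this] have "rtb a \<notin> D" "lfb (upb a) \<notin> D" by auto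
        moreover have "upb x \<in> D" using same_D x by blast
        ultimately have "x = a" using G_up[OF cvD x(1) _ a x(2)] bD bu by blast
        then show False using x ns bu by simp
      qed
    next
      case False
      then show ?thesis using True a bD bu unfolding dirP_def by blast
    qed
  next
    case False
    then have br: "b = rtb a" and nu: "\<not> UPj (content a)" using beq unfolding dirP_def by auto
    have ex: "RPj (content a) \<or> (\<exists>b'\<in>D. content b' = content a \<and> upb b' \<in> D)"
      using False unfolding dirP_def by blast
    show ?thesis
    proof (rule ccontr)
      assume ns: "\<not> same a b"
      from lemB[OF a bD[unfolded br] ns[unfolded br] nu] have h: "upb a \<notin> D" "dnb (rtb a) \<notin> D" by auto
      show False
      proof (cases "RPj (content a)")
        case True
        then obtain x where x: "x \<in> D" "content x = content a" "same x (rtb x)" unfolding RPj_def by blast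
        have "rtb x \<in> D" using same_D x by blast
        then have "x = a" using G_rt[OF cvD x(1) _ a x(2)] bD br h by blast
        then show False using x ns br by simp
      next
        case False
        then obtain b' where b': "b' \<in> D" "content b' = content a" "upb b' \<in> D" using ex by blast
        have "\<not> same b' (upb b')" using nu b' unfolding UPj_def by blast
        from lemA[OF b'(1) b'(3) this] False b'(2) have "rtb b' \<notin> D" "lfb (upb b') \<notin> D" by auto
        then show False using G_mix[OF cvD b'(1) a b'(2) b'(3) _ _ _ h] bD br by blast
      qed
    qed
  qed
qed

lemma K2:
  assumes T: "T \<in> P" and a: "a \<in> T" and b: "b \<in> T" and adj: "adjacent a b"
  shows "(a, b) \<in> cut_link D dirP \<union> (cut_link D dirP)\<inverse>"
proof -
  have aD: "a \<in> D" and bD: "b \<in> D" using sub T a b by auto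
  have up_case: "(x, upb x) \<in> cut_link D dirP" if "x \<in> T" "upb x \<in> T" for x
  proof -
    have "UPj (content x)" using that T sub unfolding UPj_def same_def by blast
    then show ?thesis using that T sub unfolding cut_link_def dirP_def dirs_defs by auto
  qed
  have rt_case: "(x, rtb x) \<in> cut_link D dirP" if "x \<in> T" "rtb x \<in> T" for x
  proof -
    have "RPj (content x)" using that T sub unfolding RPj_def same_def by blast
    then have "\<not> UPj (content x)" using L1 by blast
    then have "\<not> dirP (content x)" using \<open>RPj (content x)\<close> unfolding dirP_def by blast
    then show ?thesis using that T sub unfolding cut_link_def dirs_defs by auto
  qed
  obtain r c where aa: "a = (r, c)" by (cases a)
  obtain s t where bb: "b = (s, t)" by (cases b)
  have "\<bar>r - s\<bar> + \<bar>c - t\<bar> = 1" using adj aa bb unfolding adjacent_def by simp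
  then have "(s = r - 1 \<and> t = c) \<or> (s = r \<and> t = c + 1) \<or> (r = s - 1 \<and> c = t) \<or> (r = s \<and> c = t + 1)"
    by arith
  then consider "b = upb a" | "b = rtb a" | "a = upb b" | "a = rtb b"
    using aa bb unfolding dirs_defs by auto
  then show ?thesis
  proof cases
    case 1 then show ?thesis using up_case a b by auto
  next
    case 2 then show ?thesis using rt_case a b by auto
  next
    case 3 then show ?thesis using up_case a b by auto
  next
    case 4 then show ?thesis using rt_case a b by auto
  qed
qed

lemma class_eq:
  assumes T: "T \<in> P" and x: "x \<in> T"
  shows "cut_rel D dirP `` {x} = T"
proof
  show "cut_rel D dirP `` {x} \<subseteq> T"
  proof
    fix y assume "y \<in> cut_rel D dirP `` {x}"
    then have "(x, y) \<in> (cut_link D dirP \<union> (cut_link D dirP)\<inverse>)\<^sup>*" by (simp add: cut_rel_def)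
    then show "y \<in> T"
    proof (induction rule: rtrancl_induct)
      case base then show ?case using x .
    next
      case (step y z)
      then have "same y z \<or> same z y" using K1 by blast
      then obtain T' where "T' \<in> P" "y \<in> T'" "z \<in> T'" unfolding same_def by blast
      then show ?case using disj[OF T] step by blast
    qed
  qed
next
  show "T \<subseteq> cut_rel D dirP `` {x}"
  proof
    fix y assume y: "y \<in> T"
    have ec: "edge_connected T" using strip[OF T] unfolding border_strip_def by blast
    then have "(x, y) \<in> {(a, b). a \<in> T \<and> b \<in> T \<and> adjacent a b}\<^sup>*" using x y unfolding edge_connected_def by blast
    moreover have "{(a, b). a \<in> T \<and> b \<in> T \<and> adjacent a b} \<subseteq> cut_link D dirP \<union> (cut_link D dirP)\<inverse>"
      using K2[OF T] by blast
    ultimately have "(x, y) \<in> (cut_link D dirP \<union> (cut_link D dirP)\<inverse>)\<^sup>*" using rtrancl_mono by blast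
    then show "y \<in> cut_rel D dirP `` {x}" using x y sub[OF T] by (auto simp: cut_rel_def)
  qed
qed

lemma P_cut: "P = cut_decomp D dirP"
proof
  show "cut_decomp D dirP \<subseteq> P"
  proof
    fix C assume "C \<in> cut_decomp D dirP"
    then obtain x where x: "x \<in> D" "C = cut_rel D dirP `` {x}" unfolding cut_decomp_alt quotient_def by blast
    obtain T where "T \<in> P" "x \<in> T" using cover x by blast
    then show "C \<in> P" using class_eq x by simp
  qed
next
  show "P \<subseteq> cut_decomp D dirP"
  proof
    fix T assume T: "T \<in> P"
    then have "T \<noteq> {}" using strip unfolding border_strip_def by blast
    then obtain x where x: "x \<in> T" by blast
    then have "x \<in> D" using sub T by blast
    then show "T \<in> cut_decomp D dirP" using class_eq[OF T x] unfolding cut_decomp_alt quotient_def by blast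
  qed
qed

lemma exists_dir: "\<exists>d. P = cut_decomp D d"
  using P_cut by blast

end




lemma Init_mem:
  assumes "finite D"
  shows "k \<in> Init (cut_decomp D d) \<longleftrightarrow>
    (\<exists>b\<in>D. content b = k \<and> \<not> (if d (content b - 1) then dnb b \<in> D else lfb b \<in> D))"
  unfolding Init_cut[OF assms] using haspred_iff[of _ D d] by blast

lemma Term_mem:
  assumes "finite D"
  shows "k \<in> Term (cut_decomp D d) \<longleftrightarrow>
    (\<exists>b\<in>D. content b = k \<and> \<not> (if d (content b) then upb b \<in> D else rtb b \<in> D))"
  unfolding Term_cut[OF assms] using hassucc_iff[of _ D d] by blast

lemma set_diff_cases:
  assumes "A - {x} = B - {x}"
  shows "(A = B \<union> {x} \<longleftrightarrow> x \<in> A) \<and> (A = B - {x} \<longleftrightarrow> x \<notin> A) \<and> (A = B \<longleftrightarrow> (x \<in> A \<longleftrightarrow> x \<in> B))"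
  using assms by blast

lemma G1:
  assumes fin: "finite D" and ne: "\<exists>b\<in>D. content b = i + 1"
    and Sr: "\<forall>b\<in>D. content b = i \<longrightarrow> rtb b \<in> D"
    and Pu: "\<forall>b\<in>D. content b = i + 1 \<longrightarrow> dnb b \<in> D"
  shows False
proof -
  define I where "I = {b\<in>D. content b = i + 1}"
  have f: "finite (fst ` I)" using fin unfolding I_def by simp
  have f2: "fst ` I \<noteq> {}" using ne unfolding I_def by blast
  have "Max (fst ` I) \<in> fst ` I" using Max_in[OF f f2] .
  then obtain m where m: "m \<in> I" "fst m = Max (fst ` I)" by (metis imageE)
  have mD: "m \<in> D" "content m = i + 1" using m(1) unfolding I_def by auto
  have d1: "dnb m \<in> D" using Pu mD by blast
  have d2: "content (dnb m) = i" using mD by (simp add: dnb_def content_def)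
  have "rtb (dnb m) \<in> D" using Sr d1 d2 by blast
  moreover have "content (rtb (dnb m)) = i + 1" using d2 by (simp add: rtb_def dnb_def content_def)
  ultimately have "rtb (dnb m) \<in> I" unfolding I_def by blast
  then have "fst (rtb (dnb m)) \<le> Max (fst ` I)" using f by simp
  then show False using m by (simp add: dirs_defs)
qed

lemma G3:
  assumes fin: "finite D" and ne: "\<exists>b\<in>D. content b = i"
    and Su: "\<forall>b\<in>D. content b = i \<longrightarrow> upb b \<in> D"
    and Pr: "\<forall>b\<in>D. content b = i + 1 \<longrightarrow> lfb b \<in> D"
  shows False
proof -
  define I where "I = {b\<in>D. content b = i}"
  have f: "finite (fst ` I)" using fin unfolding I_def by simp
  have f2: "fst ` I \<noteq> {}" using ne unfolding I_def by blast
  have "Min (fst ` I) \<in> fst ` I" using Min_in[OF f f2] .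
  then obtain m where m: "m \<in> I" "fst m = Min (fst ` I)" by (metis imageE)
  have mD: "m \<in> D" "content m = i" using m(1) unfolding I_def by auto
  have d1: "upb m \<in> D" using Su mD by blast
  have d2: "content (upb m) = i + 1" using mD by (simp add: upb_def content_def)
  have "lfb (upb m) \<in> D" using Pr d1 d2 by blast
  moreover have "content (lfb (upb m)) = i" using d2 by (simp add: lfb_def upb_def content_def)
  ultimately have "lfb (upb m) \<in> I" unfolding I_def by blast
  then have "Min (fst ` I) \<le> fst (lfb (upb m))" using f by simp
  then show False using m by (simp add: dirs_defs)
qed

lemma G2:
  assumes cv: "convex D" and nPu: "\<not> (\<forall>b\<in>D. content b = i + 1 \<longrightarrow> dnb b \<in> D)"
  shows "\<forall>b\<in>D. content b = i \<longrightarrow> rtb b \<in> D"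
proof (intro ballI impI)
  obtain b' where b': "b' \<in> D" "content b' = i + 1" "dnb b' \<notin> D" using nPu by blast
  obtain r c where bb': "b' = (r, c)" by (cases b')
  fix b assume b: "b \<in> D" "content b = i"
  obtain s d where bb: "b = (s, d)" by (cases b)
  have e: "c = r + i + 1" "d = s + i" using b b' bb bb' by (auto simp: content_def)
  consider "s < r" | "s = r" | "s > r" by linarith
  then show "rtb b \<in> D"
  proof cases
    case 1
    have "(s, d + 1) \<in> D" using convexD[OF cv, of s d r c s "d + 1"] b b' bb bb' e 1 by simp
    then show ?thesis using bb by (simp add: rtb_def)
  next
    case 2 then show ?thesis using bb bb' e b' by (simp add: rtb_def)
  next
    case 3
    have "(r + 1, c) \<in> D" using convexD[OF cv, of r c s d "r + 1" c] b b' bb bb' e 3 by simp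
    then show ?thesis using b' bb' by (simp add: dnb_def)
  qed
qed

lemma G4:
  assumes cv: "convex D" and nSu: "\<not> (\<forall>b\<in>D. content b = i \<longrightarrow> upb b \<in> D)"
  shows "\<forall>b\<in>D. content b = i + 1 \<longrightarrow> lfb b \<in> D"
proof (intro ballI impI)
  obtain b where b: "b \<in> D" "content b = i" "upb b \<notin> D" using nSu by blast
  obtain r c where bb: "b = (r, c)" by (cases b)
  fix b' assume b': "b' \<in> D" "content b' = i + 1"
  obtain s d where bb': "b' = (s, d)" by (cases b')
  have e: "c = r + i" "d = s + i + 1" using b b' bb bb' by (auto simp: content_def)
  consider "s \<le> r - 1" | "s \<ge> r" by linarith
  then show "lfb b' \<in> D"
  proof cases
    case 1
    have "(r - 1, c) \<in> D" using convexD[OF cv, of s d r c "r - 1" c] b b' bb bb' e 1 by simp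
    then show ?thesis using b bb by (simp add: upb_def)
  next
    case 2
    have "(s, d - 1) \<in> D" using convexD[OF cv, of r c s d s "d - 1"] b b' bb bb' e 2 by simp
    then show ?thesis using bb' by (simp add: lfb_def)
  qed
qed

theorem theorem2p2:
  fixes la mu :: "nat list" and i :: int and P :: "box set set"
  assumes "is_partition la" and "is_partition mu" and "part_le mu la"
    and "skew la mu \<noteq> {}"
    and "edge_connected (skew la mu)"
    and "Min (content ` skew la mu) \<le> i" and "i < Max (content ` skew la mu)"
    and "outside_decomp (skew la mu) P"
  shows "let P' = twist (skew la mu) i P in
    exactly_one
     [ i \<notin> Term P \<and> i + 1 \<notin> Init P \<and>
         Init P' = Init P \<union> {i + 1} \<and> Term P' = Term P \<union> {i},
       i \<in> Term P \<and> i + 1 \<in> Init P \<and>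
         Init P' = Init P - {i + 1} \<and> Term P' = Term P - {i},
       i \<in> Term P \<and> i + 1 \<notin> Init P \<and>
         Init P' = Init P \<and> Term P' = Term P,
       i \<notin> Term P \<and> i + 1 \<in> Init P \<and>
         Init P' = Init P \<and> Term P' = Term P ]"
proof -
  define D where "D = skew la mu"
  have cv: "convex D" unfolding D_def using convex_skew assms(1,2) .
  have fin: "finite D" unfolding D_def by (rule finite_skew)
  interpret odl D P using cv fin assms(8) unfolding D_def by unfold_locales auto
  define d0 where "d0 = (SOME dir. P = cut_decomp D dir)"
  have P0: "P = cut_decomp D d0" unfolding d0_def using exists_dir by (rule someI_ex)
  define d1 where "d1 = d0(i := \<not> d0 i)"
  have tw: "twist D i P = cut_decomp D d1" unfolding twist_def d1_def d0_def Let_def ..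
  define P' where "P' = cut_decomp D d1"
  have ne: "D \<noteq> {}" using assms(4) D_def by simp
  have mn: "Min (content ` D) \<in> content ` D" "Max (content ` D) \<in> content ` D"
    using fin ne by auto
  then obtain bmin bmax where bm: "bmin \<in> D" "content bmin = Min (content ` D)"
    "bmax \<in> D" "content bmax = Max (content ` D)" by (metis imageE)
  have ec: "edge_connected D" using assms(5) D_def by simp
  have ne0: "\<exists>b\<in>D. content b = i"
    using ivt_conn[OF ec bm(1) bm(3), of i] bm assms(6,7) D_def by simp
  have ne1: "\<exists>b\<in>D. content b = i + 1"
    using ivt_conn[OF ec bm(1) bm(3), of "i + 1"] bm assms(6,7) D_def by simp
  define Su where "Su \<longleftrightarrow> (\<forall>b\<in>D. content b = i \<longrightarrow> upb b \<in> D)"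
  define Sr where "Sr \<longleftrightarrow> (\<forall>b\<in>D. content b = i \<longrightarrow> rtb b \<in> D)"
  define Pu where "Pu \<longleftrightarrow> (\<forall>b\<in>D. content b = i + 1 \<longrightarrow> dnb b \<in> D)"
  define Pr where "Pr \<longleftrightarrow> (\<forall>b\<in>D. content b = i + 1 \<longrightarrow> lfb b \<in> D)"
  have SrPu: "Sr \<longleftrightarrow> \<not> Pu"
    using G1[OF fin ne1] G2[OF cv] unfolding Sr_def Pu_def by blast
  have PrSu: "Pr \<longleftrightarrow> \<not> Su"
    using G3[OF fin ne0] G4[OF cv] unfolding Su_def Pr_def by blast
  have tm: "i \<in> Term (cut_decomp D d) \<longleftrightarrow> \<not> (if d i then Su else Sr)" for d
    unfolding Term_mem[OF fin] Su_def Sr_def by auto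
  have im: "i + 1 \<in> Init (cut_decomp D d) \<longleftrightarrow> \<not> (if d i then Pu else Pr)" for d
    unfolding Init_mem[OF fin] Pu_def Pr_def by auto
  have tP: "i \<in> Term P \<longleftrightarrow> \<not> (if d0 i then Su else Sr)" using tm P0 by simp
  have tP': "i \<in> Term P' \<longleftrightarrow> \<not> (if d0 i then Sr else Su)" using tm[of d1] P'_def d1_def by simp
  have iP: "i + 1 \<in> Init P \<longleftrightarrow> \<not> (if d0 i then Pu else Pr)" using im P0 by simp
  have iP': "i + 1 \<in> Init P' \<longleftrightarrow> \<not> (if d0 i then Pr else Pu)" using im[of d1] P'_def d1_def by simp
  have TE: "Term P' - {i} = Term P - {i}"
  proof -
    have "k \<in> Term P' \<longleftrightarrow> k \<in> Term P" if "k \<noteq> i" for k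
    proof -
      have "\<forall>b. content b = k \<longrightarrow> d1 (content b) = d0 (content b)" using that d1_def by auto
      then show ?thesis unfolding P'_def P0 Term_mem[OF fin] by auto
    qed
    then show ?thesis by blast
  qed
  have IE: "Init P' - {i + 1} = Init P - {i + 1}"
  proof -
    have "k \<in> Init P' \<longleftrightarrow> k \<in> Init P" if "k \<noteq> i + 1" for k
    proof -
      have "\<forall>b. content b = k \<longrightarrow> d1 (content b - 1) = d0 (content b - 1)" using that d1_def by auto
      then show ?thesis unfolding P'_def P0 Init_mem[OF fin] by auto
    qed
    then show ?thesis by blast
  qed
  have e1: "(Init P' = Init P \<union> {i + 1}) = (i + 1 \<in> Init P')"
    and e2: "(Init P' = Init P - {i + 1}) = (i + 1 \<notin> Init P')"
    and e3: "(Init P' = Init P) = (i + 1 \<in> Init P' \<longleftrightarrow> i + 1 \<in> Init P)"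
    using set_diff_cases[OF IE] by blast+
  have f1: "(Term P' = Term P \<union> {i}) = (i \<in> Term P')"
    and f2: "(Term P' = Term P - {i}) = (i \<notin> Term P')"
    and f3: "(Term P' = Term P) = (i \<in> Term P' \<longleftrightarrow> i \<in> Term P)"
    using set_diff_cases[OF TE] by blast+
  have geq: "twist (skew la mu) i P = P'" using tw P'_def D_def by simp
  show ?thesis
    unfolding geq Let_def e1 e2 e3 f1 f2 f3 tP tP' iP iP'
    using SrPu PrSu
    by (cases "d0 i"; cases Su; cases Pu) (simp_all add: exactly_one_def)
qed


end
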